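(* Let $n$ be a positive integer and $g=3n+1$. If $G$ is a pure $(2n)$-sparse gapset of genus $g$, then $G$ is not pseudo-symmetric.
   Context: A gapset is a finite set $G\subset\mathbb{N}=\{1,2,\dots\}$ such that whenever $z\in G$ and $z=x+y$ with $x,y\in\mathbb{N}$, then $x\in G$ or $y\in G$; its genus is $g=\#G$. Writing $G=\{\ell_1<\dots<\ell_g\}$, the Frobenius number is $F(G)=\ell_g$; $G$ is pseudo-symmetric if $F(G)=2g-2$. $G$ is pure $\kappa$-sparse if $\ell_{i+1}-\ell_i\le\kappa$ for all $i$ with equality for some $i$. *)

theory Defs
  imports Main
begin

definition gapset :: "nat set \<Rightarrow> bool" where
  "gapset G \<longleftrightarrow> finite G \<and> 0 \<notin> G \<and>
     (\<forall>z\<in>G. \<forall>x y. x > 0 \<longrightarrow> y > 0 \<longrightarrow> z = x + y \<longrightarrow> x \<in> G \<or> y \<in> G)"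

definition genus :: "nat set \<Rightarrow> nat" where
  "genus G = card G"

definition frobenius :: "nat set \<Rightarrow> nat" where
  "frobenius G = Max G"

definition pseudo_symmetric :: "nat set \<Rightarrow> bool" where
  "pseudo_symmetric G \<longleftrightarrow> G \<noteq> {} \<and> int (frobenius G) = 2 * int (genus G) - 2"

definition consecutive :: "nat set \<Rightarrow> nat \<Rightarrow> nat \<Rightarrow> bool" where
  "consecutive G a b \<longleftrightarrow> a \<in> G \<and> b \<in> G \<and> a < b \<and> (\<forall>c\<in>G. \<not> (a < c \<and> c < b))"

definition pure_sparse :: "nat \<Rightarrow> nat set \<Rightarrow> bool" where
  "pure_sparse \<kappa> G \<longleftrightarrow>
     (\<forall>a b. consecutive G a b \<longrightarrow> b - a \<le> \<kappa>) \<and>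
     (\<exists>a b. consecutive G a b \<and> b - a = \<kappa>)"

end

theory Submission
  imports Defs
begin

lemma excl:
  fixes N :: nat
  assumes gs: "gapset G" and mx: "Max G = 2*N" and cd: "card G = N + 1" and N: "N > 0"
    and x: "0 < x" "x < N" and xG: "x \<in> G" and yG: "2*N - x \<in> G"
  shows False
proof -
  have fin: "finite G" and z: "0 \<notin> G"
    and sp: "\<And>z u v. z \<in> G \<Longrightarrow> u > 0 \<Longrightarrow> v > 0 \<Longrightarrow> z = u + v \<Longrightarrow> u \<in> G \<or> v \<in> G"
    using gs unfolding gapset_def by blast+
  have ne: "G \<noteq> {}" using cd by auto
  have FG: "2*N \<in> G" using Max_in[OF fin ne] mx by simp
  have le: "\<And>y. y \<in> G \<Longrightarrow> y \<le> 2*N" using Max_ge[OF fin] mx by metis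
  have NG: "N \<in> G" using sp[OF FG, of N N] N by auto
  define A where "A = G \<inter> {1..<N}"
  define B where "B = G \<inter> {N<..<2*N}"
  have Gs: "G = A \<union> B \<union> {N, 2*N}"
  proof
    show "G \<subseteq> A \<union> B \<union> {N, 2*N}"
    proof
      fix y assume y: "y \<in> G"
      have "y \<noteq> 0" using y z by metis
      then show "y \<in> A \<union> B \<union> {N, 2*N}" using le[OF y] y unfolding A_def B_def by auto
    qed
    show "A \<union> B \<union> {N, 2*N} \<subseteq> G" using NG FG unfolding A_def B_def by auto
  qed
  have finA: "finite A" and finB: "finite B" unfolding A_def B_def by auto
  have "card G = card A + card B + 2"
  proof -
    have d1: "(A \<union> B) \<inter> {N, 2*N} = {}" unfolding A_def B_def by auto
    have d2: "A \<inter> B = {}" unfolding A_def B_def by auto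
    have "card G = card (A \<union> B) + card {N, 2*N}"
      using Gs card_Un_disjoint[OF _ _ d1] finA finB by simp
    also have "card {N, 2*N} = 2" using N by simp
    also have "card (A \<union> B) = card A + card B" using card_Un_disjoint[OF finA finB d2] .
    finally show ?thesis .
  qed
  hence cAB: "card A + card B = N - 1" using cd by simp
  define f where "f = (\<lambda>y::nat. 2*N - y)"
  have inj: "inj_on f B" unfolding inj_on_def f_def B_def by auto
  have cfB: "card (f ` B) = card B" using card_image[OF inj] .
  have cov: "{1..<N} \<subseteq> A \<union> f ` B"
  proof
    fix y assume y: "y \<in> {1..<N}"
    show "y \<in> A \<union> f ` B"
    proof (cases "y \<in> G")
      case True thus ?thesis using y unfolding A_def by auto
    next
      case False
      have "y \<in> G \<or> 2*N - y \<in> G" using sp[OF FG, of y "2*N - y"] y by auto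
      hence "2*N - y \<in> B" using False y unfolding B_def by auto
      moreover have "y = f (2*N - y)" using y unfolding f_def by auto
      ultimately show ?thesis by blast
    qed
  qed
  have fB: "f ` B \<subseteq> {1..<N}" unfolding f_def B_def by auto
  have AB: "A \<union> f ` B \<subseteq> {1..<N}" using fB unfolding A_def by auto
  have "card (A \<union> f ` B) = N - 1"
    using card_mono[OF _ cov] card_mono[OF _ AB] finA finB by simp
  moreover have "card (A \<union> f ` B) + card (A \<inter> f ` B) = card A + card (f ` B)"
    using card_Un_Int[OF finA finite_imageI[OF finB]] by simp
  ultimately have "card (A \<inter> f ` B) = 0" using cAB cfB by simp
  hence emp: "A \<inter> f ` B = {}" using finA by simp
  have "x \<in> A" using x xG unfolding A_def by auto
  moreover have "2*N - x \<in> B" using x yG unfolding B_def by auto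
  moreover have "x = f (2*N - x)" using x unfolding f_def by auto
  ultimately show False using emp by blast
qed

theorem mainTheorem7:
  fixes n :: nat and G :: "nat set"
  assumes "n > 0"
    and "gapset G"
    and "genus G = 3 * n + 1"
    and "pure_sparse (2 * n) G"
  shows "\<not> pseudo_symmetric G"
proof
  assume ps: "pseudo_symmetric G"
  have fin: "finite G" and z: "0 \<notin> G"
    and sp: "\<And>z u v. z \<in> G \<Longrightarrow> u > 0 \<Longrightarrow> v > 0 \<Longrightarrow> z = u + v \<Longrightarrow> u \<in> G \<or> v \<in> G"
    using assms(2) unfolding gapset_def by blast+
  have cd: "card G = 3*n + 1" using assms(3) unfolding genus_def .
  have mx: "Max G = 2*(3*n)" using ps cd unfolding pseudo_symmetric_def frobenius_def genus_def by simp
  have ne: "G \<noteq> {}" using cd by auto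
  have FG: "6*n \<in> G" using Max_in[OF fin ne] mx by simp
  have le: "\<And>y. y \<in> G \<Longrightarrow> y \<le> 6*n" proof - fix y assume "y \<in> G" hence "y \<le> Max G" using Max_ge[OF fin] by blast thus "y \<le> 6*n" using mx by simp qed
  have ex: "\<And>x. 0 < x \<Longrightarrow> x < 3*n \<Longrightarrow> x \<in> G \<Longrightarrow> 2*(3*n) - x \<in> G \<Longrightarrow> False"
  proof -
    fix x assume "0 < x" "x < 3*n" "x \<in> G" "2*(3*n) - x \<in> G"
    moreover have "card G = 3*n + 1" using cd .
    moreover have "3*n > 0" using assms(1) by simp
    ultimately show False using excl[OF assms(2) mx] by blast
  qed
  obtain a b where cab: "consecutive G a b" and ba: "b - a = 2*n"
    using assms(4) unfolding pure_sparse_def by blast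
  have aG: "a \<in> G" and bG: "b \<in> G" and ab: "a < b" and btw: "\<And>c. c \<in> G \<Longrightarrow> a < c \<Longrightarrow> c < b \<Longrightarrow> False"
    using cab unfolding consecutive_def by auto
  have small: "\<And>k. 0 < k \<Longrightarrow> k < 2*n \<Longrightarrow> k \<in> G"
  proof -
    fix k assume k: "0 < k" "k < 2*n"
    have "a < b - k" using k ba ab by linarith
    hence "b - k \<notin> G" using btw[of "b-k"] k by auto
    thus "k \<in> G" using sp[OF bG, of "b-k" k] k ba ab by auto
  qed
  have n2: "2*n \<in> G"
  proof (rule ccontr)
    assume h: "2*n \<notin> G"
    have p: "2*n > 0" "4*n > 0" using assms(1) by simp_all
    have "4*n \<notin> G"
    proof
      assume "4*n \<in> G"
      from sp[OF this p(1) p(1)] h show False by simp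
    qed
    thus False using sp[OF FG p(1) p(2)] h by simp
  qed
  have p3: "3*n > 0" using assms(1) by simp
  have n3: "3*n \<in> G" using sp[OF FG p3 p3] by auto
  have a0: "a \<noteq> 0" using aG z by metis
  have a2: "a \<ge> 2*n"
  proof (rule ccontr)
    assume "\<not> a \<ge> 2*n"
    hence "a < 2*n" "2*n < b" using ba ab a0 by linarith+
    thus False using btw[OF n2] by blast
  qed
  have a3: "a \<ge> 3*n"
  proof (rule ccontr)
    assume "\<not> a \<ge> 3*n"
    hence "a < 3*n" "3*n < b" using ba ab a2 by linarith+
    thus False using btw[OF n3] by blast
  qed
  have b6: "b = 6*n"
  proof (rule ccontr)
    assume "b \<noteq> 6*n"
    hence "b < 6*n" using le[OF bG] by simp
    moreover have "6*n - b \<in> G" using small[of "6*n - b"] \<open>b < 6*n\<close> ba a3 by auto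
    moreover have "6*n - b < 3*n" "0 < 6*n - b" using ba ab a3 \<open>b < 6*n\<close> by linarith+
    moreover have "2*(3*n) - (6*n - b) = b" using \<open>b < 6*n\<close> by simp
    ultimately show False using ex[of "6*n - b"] bG by metis
  qed
  hence "a = 4*n" using ba ab by simp
  thus False using ex[of "2*n"] n2 aG assms(1) by auto
qed

end
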